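(* Let $R$ be a finite semiring with $0$ and $1$, let $M\in\mathrm{Mat}_m(R)$, and suppose the preperiod $\mathrm{pr}(M)$ exists. Let $n\ge1$, let $b_0,\dots,b_{n-1}\in\mathbb{N}$ be such that the integer circulant matrix $B=\mathrm{Circ}(b_0,\dots,b_{n-1})$ satisfies $\det(B)\neq 0$, and let $v=(M^{b_0},\dots,M^{b_{n-1}})$. Let $A=\mathrm{Circ}(a_0,\dots,a_{n-1})\in\mathrm{Circ}_n(\mathbb{N})$ satisfy $$\sum_{i=0}^{n-1} a_i\, b_{i+k}\le \mathrm{pr}(M)-1\quad\text{for every }k=0,\dots,n-1$$ (indices modulo $n$). Then for $X\in\mathrm{Circ}_n(\mathbb{N})$, $Xv=Av$ holds if and only if $X=A$.
   Context: $\mathrm{Circ}(c_0,\dots,c_{n-1})$ denotes the $n\times n$ matrix with $(i,j)$ entry $c_{(i-j)\bmod n}$ ($0\le i,j\le n-1$), and $\mathrm{Circ}_n(\mathbb{N})$ is the set of such matrices with entries in $\mathbb{N}=\{0,1,2,\dots\}$. For $C=\mathrm{Circ}(c_0,\dots,c_{n-1})\in\mathrm{Circ}_n(\mathbb{N})$ and a tuple $w=(w_0,\dots,w_{n-1})$ of pairwise commuting elements of a monoid, $Cw$ is the tuple with $(Cw)_i=\prod_{j=0}^{n-1} w_j^{\,c_{j-i}}$ (indices mod $n$, $w^0$ the identity); here the entries of $v$ are powers of $M$, hence commute. A semiring is a set with two associative operations $+,\cdot$, $\cdot$ distributing over $+$ on both sides; $R$ is additively commutative with $0$ and $1$. For $g$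 in a finite monoid, the preperiod $\mathrm{pr}(g)$ is the largest non-negative integer $m$ such that $g^k\neq g^m$ for all $k>m$ (exponents in $\mathbb{N}$); "exists" means such an $m$ exists. *)

theory Defs
  imports "Jordan_Normal_Form.Determinant"
begin

text \<open>Preperiod of an element given by its power sequence pw k = g^k.
  p is a candidate iff g^k differs from g^p for all k > p; the preperiod is the
  largest candidate, and it exists iff a largest candidate exists.\<close>

definition pr_cand :: "(nat \<Rightarrow> 'b) \<Rightarrow> nat \<Rightarrow> bool" where
  "pr_cand pw p \<longleftrightarrow> (\<forall>k>p. pw k \<noteq> pw p)"

definition pr_exists :: "(nat \<Rightarrow> 'b) \<Rightarrow> bool" where
  "pr_exists pw \<longleftrightarrow> (\<exists>p. pr_cand pw p \<and> (\<forall>q. pr_cand pw q \<longrightarrow> q \<le> p))"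

definition preperiod :: "(nat \<Rightarrow> 'b) \<Rightarrow> nat" where
  "preperiod pw = (GREATEST p. pr_cand pw p)"

definition circ_int_mat :: "nat \<Rightarrow> (nat \<Rightarrow> nat) \<Rightarrow> int mat" where
  "circ_int_mat n c = mat n n (\<lambda>(i,j). int (c ((i + n - j) mod n)))"

fun prod_mat_upto :: "nat \<Rightarrow> (nat \<Rightarrow> 'a::semiring_1 mat) \<Rightarrow> nat \<Rightarrow> 'a mat" where
  "prod_mat_upto m f 0 = 1\<^sub>m m"
| "prod_mat_upto m f (Suc k) = prod_mat_upto m f k * f k"

text \<open>Action of Circ(c_0,...,c_{n-1}) on a tuple w of m x m matrices:
  (Cw)_i = prod_{j=0}^{n-1} w_j ^ c_{(j-i) mod n}.\<close>

definition circ_act :: "nat \<Rightarrow> nat \<Rightarrow> (nat \<Rightarrow> nat) \<Rightarrow> (nat \<Rightarrow> 'a::semiring_1 mat) \<Rightarrow> nat \<Rightarrow> 'a mat" where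
  "circ_act m n c w i = prod_mat_upto m (\<lambda>j. w j ^\<^sub>m c ((j + n - i) mod n)) n"

end

theory Submission
  imports Defs
begin
lemma pw_add: assumes "M \<in> carrier_mat m m" shows "M ^\<^sub>m (a + c) = M ^\<^sub>m a * M ^\<^sub>m (c::nat)"
proof (induction c)
  case 0 then show ?case using assms by simp
next
  case (Suc c) then show ?case using assms
    by (simp add: assoc_mult_mat[of _ m m _ m _ m])
qed
lemma pw_mult: assumes "M \<in> carrier_mat m m" shows "(M ^\<^sub>m a) ^\<^sub>m c = M ^\<^sub>m (a * c)"
proof (induction c)
  case 0 then show ?case using assms by simp
next
  case (Suc c) then show ?case using assms pw_add[OF assms, of "a*c" a]
    by (simp add: add.commute)
qed
lemma reidx1: assumes "i < (n::nat)" shows "(\<Sum>j<n. g j) = (\<Sum>l<n. g ((l + i) mod n))"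
proof -
  have "bij_betw (\<lambda>l. (l + i) mod n) {..<n} {..<n}"
  proof (rule bij_betw_byWitness[where f'="\<lambda>j. (j + n - i) mod n"])
    show "\<forall>a\<in>{..<n}. ((a + i) mod n + n - i) mod n = a" using assms
      by (auto simp: mod_if)
    show "\<forall>a\<in>{..<n}. ((a + n - i) mod n + i) mod n = a" using assms
      by (auto simp: mod_if)
  qed (use assms in auto)
  from sum.reindex_bij_betw[OF this, of g] show ?thesis by simp
qed
lemma reidx2: "(\<Sum>j<(n::nat). g j) = (\<Sum>l<n. g ((n - l) mod n))"
proof -
  have "bij_betw (\<lambda>l. (n - l) mod n) {..<n} {..<n}"
    by (rule bij_betw_byWitness[where f'="\<lambda>l. (n - l) mod n"]) (auto simp: mod_if)
  from sum.reindex_bij_betw[OF this, of g] show ?thesis by simp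
qed

lemma prod_upto_pow: assumes "M \<in> carrier_mat m m"
  shows "prod_mat_upto m (\<lambda>j. (M ^\<^sub>m b j) ^\<^sub>m c j) k = M ^\<^sub>m (\<Sum>j<k. b j * c j)"
proof (induction k)
  case 0 then show ?case using assms by simp
next
  case (Suc k) then show ?case using assms by (simp add: pw_mult[OF assms] pw_add[OF assms])
qed

lemma cand_down: assumes M: "M \<in> carrier_mat m m" and p: "pr_cand (\<lambda>k. M ^\<^sub>m k) p" and qp: "q \<le> p"
  shows "pr_cand (\<lambda>k. M ^\<^sub>m k) q"
  unfolding pr_cand_def
proof (intro allI impI notI)
  fix k assume kq: "k > q" and eq: "M ^\<^sub>m k = M ^\<^sub>m q"
  have "M ^\<^sub>m (k + (p - q)) = M ^\<^sub>m (q + (p - q))"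
    using eq by (simp add: pw_add[OF M])
  hence "M ^\<^sub>m (p + (k - q)) = M ^\<^sub>m p" using kq qp by (simp add: add.commute)
  moreover have "p + (k - q) > p" using kq by simp
  ultimately show False using p unfolding pr_cand_def by blast
qed

lemma circ_act_eq: assumes M: "M \<in> carrier_mat m m" and i: "i < n"
  shows "circ_act m n c (\<lambda>j. M ^\<^sub>m b j) i = M ^\<^sub>m (\<Sum>l<n. c l * b ((l + i) mod n))"
proof -
  have "circ_act m n c (\<lambda>j. M ^\<^sub>m b j) i = M ^\<^sub>m (\<Sum>j<n. b j * c ((j + n - i) mod n))"
    unfolding circ_act_def using prod_upto_pow[OF M, of b "\<lambda>j. c ((j + n - i) mod n)" n] by simp
  also have "(\<Sum>j<n. b j * c ((j + n - i) mod n)) = (\<Sum>l<n. b ((l + i) mod n) * c (((l + i) mod n + n - i) mod n))"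
    by (rule reidx1[OF i])
  also have "\<dots> = (\<Sum>l<n. c l * b ((l + i) mod n))"
    by (rule sum.cong) (use i in \<open>auto simp: mod_if\<close>)
  finally show ?thesis .
qed

theorem mainTheorem6:
  fixes M :: "'a::{semiring_1, finite} mat"
    and m n :: nat and a b x :: "nat \<Rightarrow> nat"
  assumes "M \<in> carrier_mat m m"
    and "pr_exists (\<lambda>k. M ^\<^sub>m k)"
    and "n \<ge> 1"
    and "det (circ_int_mat n b) \<noteq> 0"
    and "\<forall>k<n. int (\<Sum>i<n. a i * b ((i + k) mod n)) \<le> int (preperiod (\<lambda>k. M ^\<^sub>m k)) - 1"
  shows "(\<forall>i<n. circ_act m n x (\<lambda>j. M ^\<^sub>m b j) i = circ_act m n a (\<lambda>j. M ^\<^sub>m b j) i)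
         \<longleftrightarrow> (\<forall>i<n. x i = a i)"
proof
  assume xa: "\<forall>i<n. x i = a i"
  show "\<forall>i<n. circ_act m n x (\<lambda>j. M ^\<^sub>m b j) i = circ_act m n a (\<lambda>j. M ^\<^sub>m b j) i"
  proof (intro allI impI)
    fix i assume i: "i < n"
    have "(\<Sum>l<n. x l * b ((l + i) mod n)) = (\<Sum>l<n. a l * b ((l + i) mod n))"
      by (rule sum.cong) (use xa in auto)
    then show "circ_act m n x (\<lambda>j. M ^\<^sub>m b j) i = circ_act m n a (\<lambda>j. M ^\<^sub>m b j) i"
      by (simp add: circ_act_eq[OF assms(1) i])
  qed
next
  assume eqs: "\<forall>i<n. circ_act m n x (\<lambda>j. M ^\<^sub>m b j) i = circ_act m n a (\<lambda>j. M ^\<^sub>m b j) i"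
  define pw where "pw = (\<lambda>k. M ^\<^sub>m k)"
  obtain p where p: "pr_cand pw p" and pmax: "\<forall>q. pr_cand pw q \<longrightarrow> q \<le> p"
    using assms(2) unfolding pr_exists_def pw_def by blast
  have pp: "preperiod pw = p" unfolding preperiod_def
    by (rule Greatest_equality) (use p pmax in auto)
  have E: "(\<Sum>l<n. x l * b ((l + i) mod n)) = (\<Sum>l<n. a l * b ((l + i) mod n))" if i: "i < n" for i
  proof -
    let ?s = "\<Sum>l<n. a l * b ((l + i) mod n)"
    let ?t = "\<Sum>l<n. x l * b ((l + i) mod n)"
    have "int ?s \<le> int p - 1" using assms(5) i pp unfolding pw_def by auto
    hence sp: "?s \<le> p" by linarith
    have eq: "M ^\<^sub>m ?t = M ^\<^sub>m ?s" using eqs i circ_act_eq[OF assms(1) i, of x b] circ_act_eq[OF assms(1) i, of a b] by metis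
    have cs: "pr_cand pw ?s" by (rule cand_down[OF assms(1) p[unfolded pw_def] sp, folded pw_def])
    show ?thesis
    proof (rule ccontr)
      assume ne: "?t \<noteq> ?s"
      show False
      proof (cases "?t < ?s")
        case True
        have "pr_cand pw ?t" using cand_down[OF assms(1) p[unfolded pw_def]] sp True unfolding pw_def by simp
        then show False using eq True unfolding pr_cand_def pw_def by metis
      next
        case False
        then show False using eq ne cs unfolding pr_cand_def pw_def by (metis linorder_neqE_nat)
      qed
    qed
  qed
  define C where "C = circ_int_mat n b"
  have C: "C \<in> carrier_mat n n" unfolding C_def circ_int_mat_def by simp
  define z where "z = vec n (\<lambda>j. int (x ((n - j) mod n)) - int (a ((n - j) mod n)))"
  have z: "z \<in> carrier_vec n" unfolding z_def by simp
  have Cz: "C *\<^sub>v z = 0\<^sub>v n"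
  proof (rule eq_vecI)
    fix i assume i: "i < dim_vec (0\<^sub>v n :: int vec)"
    hence i: "i < n" by simp
    have "(C *\<^sub>v z) $ i = (\<Sum>j<n. int (b ((i + n - j) mod n)) * (int (x ((n - j) mod n)) - int (a ((n - j) mod n))))"
      using i unfolding C_def circ_int_mat_def z_def
      by (simp add: mult_mat_vec_def scalar_prod_def lessThan_atLeast0)
    also have "\<dots> = (\<Sum>l<n. int (b ((i + n - (n - l) mod n) mod n)) * (int (x ((n - (n - l) mod n) mod n)) - int (a ((n - (n - l) mod n) mod n))))"
      by (rule reidx2)
    also have "\<dots> = (\<Sum>l<n. int (x l * b ((l + i) mod n)) - int (a l * b ((l + i) mod n)))"
    proof (rule sum.cong)
      fix l assume l: "l \<in> {..<n}"
      have 1: "(n - (n - l) mod n) mod n = l" using l by (auto simp: mod_if)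
      have 2: "(i + n - (n - l) mod n) mod n = (l + i) mod n" using l i
        by (cases "l = 0") (auto simp: mod_if)
      show "int (b ((i + n - (n - l) mod n) mod n)) * (int (x ((n - (n - l) mod n) mod n)) - int (a ((n - (n - l) mod n) mod n)))
        = int (x l * b ((l + i) mod n)) - int (a l * b ((l + i) mod n))"
        unfolding 1 2 by (simp add: algebra_simps)
    qed simp
    also have "\<dots> = int (\<Sum>l<n. x l * b ((l + i) mod n)) - int (\<Sum>l<n. a l * b ((l + i) mod n))"
      by (simp add: sum_subtractf)
    also have "\<dots> = 0" using E[OF i] by simp
    finally show "(C *\<^sub>v z) $ i = 0\<^sub>v n $ i" using i by simp
  qed (use C in simp)
  have z0: "z = 0\<^sub>v n"
    using det_0_iff_vec_prod_zero[OF C] assms(4) Cz z unfolding C_def by blast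
  show "\<forall>i<n. x i = a i"
  proof (intro allI impI)
    fix l assume l: "l < n"
    define j where "j = (n - l) mod n"
    have j: "j < n" using l unfolding j_def by simp
    have "(n - j) mod n = l" using l unfolding j_def by (auto simp: mod_if)
    moreover have "z $ j = 0" using z0 j by simp
    ultimately show "x l = a l" using j unfolding z_def by simp
  qed
qed
end
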